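(* For every $\lambda\in\Lambda$, the map $Q^*_\lambda=P_\lambda+Q$ has a unique fixed point $h(\lambda)$ in the closed ball $\{z:|z-1|\le |Q(1)|/p\}$. The resulting function $h:\Lambda\to\{z:|z-1|\le|Q(1)|/p\}$, $\lambda\mapsto h(\lambda)$, is holomorphic on $\Lambda$ (it is the uniform limit on $\Lambda$ of rational functions in $\lambda$ without poles in $\Lambda$, equivalently given by a power series convergent on $\Lambda$).
   Context: Let $p$ be a prime and $\mathbb C_p$ the completion of an algebraic closure of $\mathbb Q_p$, with $p$-adic absolute value $|\cdot|$, $|p|=1/p$. Let $\Lambda=\{\lambda\in\mathbb C_p:|\lambda-1|<1\}$ and $P_\lambda(z)=\frac{\lambda}{p}z^p+\left(1-\frac{\lambda}{p}\right)z^{p+1}$ for $\lambda\in\Lambda$. Let $\rho=p^{-1/(p-1)}$. Fix $\hat r\in|\mathbb C_p^*|$ with $\hat r>1$, $B=\{z:|z|\le\hat r\}$, and let $\mathcal H(B)$ be the power series $\sum a_iz^i$ convergent on $B$ with norm $\|f\|_B=\sup_i|a_i|\hat r^{\,i}$. Fix $Q\in\mathcal H(B)$ with $\|Q\|_B<\rho$. *)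

theory Defs
  imports "HOL-Analysis.Analysis" "HOL-Computational_Algebra.Polynomial"
begin

text \<open>Abstract model of C_p: a field of characteristic 0 with an absolute value
  that is non-archimedean, normalised by |p| = 1/p, complete, algebraically closed,
  and in which the algebraic numbers are dense. These properties characterise C_p
  up to isometric isomorphism.\<close>

definition is_Cp :: "nat \<Rightarrow> ('a::field_char_0 \<Rightarrow> real) \<Rightarrow> bool" where
  "is_Cp p av \<longleftrightarrow>
     prime p \<and>
     (\<forall>x. av x \<ge> 0) \<and> (\<forall>x. av x = 0 \<longleftrightarrow> x = 0) \<and>
     (\<forall>x y. av (x * y) = av x * av y) \<and>
     (\<forall>x y. av (x + y) \<le> max (av x) (av y)) \<and>
     av (of_nat p) = 1 / real p \<and>
     (\<forall>s::nat \<Rightarrow> 'a. (\<forall>e>0. \<exists>N. \<forall>m\<ge>N. \<forall>n\<ge>N. av (s m - s n) < e)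
          \<longrightarrow> (\<exists>l. (\<lambda>n. av (s n - l)) \<longlonglongrightarrow> 0)) \<and>
     (\<forall>P::'a poly. degree P > 0 \<longrightarrow> (\<exists>x. poly P x = 0)) \<and>
     (\<forall>x. \<forall>e>0. \<exists>y. algebraic y \<and> av (x - y) < e)"

definition ps_sums :: "('a::field \<Rightarrow> real) \<Rightarrow> (nat \<Rightarrow> 'a) \<Rightarrow> 'a \<Rightarrow> 'a \<Rightarrow> bool" where
  "ps_sums av a z v \<longleftrightarrow> (\<lambda>n. av ((\<Sum>i<n. a i * z ^ i) - v)) \<longlonglongrightarrow> 0"

definition Pfam :: "nat \<Rightarrow> 'a::field \<Rightarrow> 'a \<Rightarrow> 'a" where
  "Pfam p lam z = (lam / of_nat p) * z ^ p + (1 - lam / of_nat p) * z ^ (p + 1)"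

definition holo_Lambda :: "('a::field \<Rightarrow> real) \<Rightarrow> ('a \<Rightarrow> 'a) \<Rightarrow> bool" where
  "holo_Lambda av h \<longleftrightarrow>
     (\<exists>c::nat \<Rightarrow> 'a. \<forall>lam. av (lam - 1) < 1 \<longrightarrow> ps_sums av c (lam - 1) (h lam))"

end

theory Submission
  imports Defs "HOL-Computational_Algebra.Formal_Power_Series"
begin

unbundle no vec_syntax
unbundle fps_syntax


locale ultra =
  fixes S :: "'r::comm_ring_1 set" and N :: "'r \<Rightarrow> real" and pp :: nat
  assumes S0: "0 \<in> S" and S1: "1 \<in> S"
    and Sadd: "x \<in> S \<Longrightarrow> y \<in> S \<Longrightarrow> x + y \<in> S"
    and Sneg: "x \<in> S \<Longrightarrow> - x \<in> S"
    and Smult: "x \<in> S \<Longrightarrow> y \<in> S \<Longrightarrow> x * y \<in> S"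
    and N_nonneg: "x \<in> S \<Longrightarrow> N x \<ge> 0"
    and N_zero: "N 0 = 0"
    and N_eq0: "x \<in> S \<Longrightarrow> N x = 0 \<Longrightarrow> x = 0"
    and N_add: "x \<in> S \<Longrightarrow> y \<in> S \<Longrightarrow> N (x + y) \<le> max (N x) (N y)"
    and N_neg: "x \<in> S \<Longrightarrow> N (- x) = N x"
    and N_mult: "x \<in> S \<Longrightarrow> y \<in> S \<Longrightarrow> N (x * y) \<le> N x * N y"
    and N_one: "N 1 \<le> 1"
    and pp_gt: "pp > 1"
    and N_p: "x \<in> S \<Longrightarrow> N (of_nat pp * x) \<le> N x / pp"
    and complete: "\<And>s::nat \<Rightarrow> 'r. (\<forall>n. s n \<in> S) \<Longrightarrow>
        (\<forall>e>0. \<exists>M. \<forall>m\<ge>M. \<forall>n\<ge>M. N (s m - s n) < e) \<Longrightarrow>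
        \<exists>l\<in>S. (\<lambda>n. N (s n - l)) \<longlonglongrightarrow> 0"
begin

lemma Sdiff: "x \<in> S \<Longrightarrow> y \<in> S \<Longrightarrow> x - y \<in> S"
  using Sadd Sneg by (metis diff_conv_add_uminus)

lemma Spow: "x \<in> S \<Longrightarrow> x ^ n \<in> S"
  by (induction n) (auto simp: S1 Smult)

lemma Snat: "of_nat n \<in> S"
  by (induction n) (auto simp: S0 S1 Sadd)

lemma Ssum: "(\<And>i. i \<in> A \<Longrightarrow> f i \<in> S) \<Longrightarrow> sum f A \<in> S"
  by (induction A rule: infinite_finite_induct) (auto simp: S0 Sadd)

lemma N_diff: "x \<in> S \<Longrightarrow> y \<in> S \<Longrightarrow> N (x - y) \<le> max (N x) (N y)"
  using N_add[of x "-y"] N_neg[of y] Sneg by simp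

lemma N_sym: "x \<in> S \<Longrightarrow> y \<in> S \<Longrightarrow> N (x - y) = N (y - x)"
  using N_neg[of "y - x"] Sdiff by simp

lemma N_tri: "x \<in> S \<Longrightarrow> y \<in> S \<Longrightarrow> z \<in> S \<Longrightarrow> N (x - z) \<le> max (N (x - y)) (N (y - z))"
  using N_add[of "x - y" "y - z"] Sdiff by simp

lemma N_sum_le: "(\<And>i. i \<in> A \<Longrightarrow> f i \<in> S) \<Longrightarrow> (\<And>i. i \<in> A \<Longrightarrow> N (f i) \<le> B) \<Longrightarrow> B \<ge> 0
   \<Longrightarrow> N (sum f A) \<le> B"
proof (induction A rule: infinite_finite_induct)
  case (insert x F)
  have "N (sum f (insert x F)) = N (f x + sum f F)" using insert by simp
  also have "\<dots> \<le> max (N (f x)) (N (sum f F))"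
    by (rule N_add) (use insert Ssum[of F f] in auto)
  also have "\<dots> \<le> B" using insert by auto
  finally show ?case .
qed (auto simp: N_zero)

lemma N_pow_le1: "x \<in> S \<Longrightarrow> N x \<le> 1 \<Longrightarrow> N (x ^ n) \<le> 1"
proof (induction n)
  case (Suc n)
  have "N (x ^ Suc n) \<le> N x * N (x ^ n)" using N_mult Spow Suc by simp
  also have "\<dots> \<le> 1" using Suc N_nonneg Spow by (simp add: mult_le_one)
  finally show ?case .
qed (simp add: N_one)

lemma N_pow_diff: "x \<in> S \<Longrightarrow> y \<in> S \<Longrightarrow> N x \<le> 1 \<Longrightarrow> N y \<le> 1 \<Longrightarrow> N (x ^ n - y ^ n) \<le> N (x - y)"
proof (induction n)
  case 0 then show ?case using N_zero N_nonneg Sdiff by simp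
next
  case (Suc n)
  have eq: "x ^ Suc n - y ^ Suc n = x * (x ^ n - y ^ n) + (x - y) * y ^ n"
    by (simp add: algebra_simps)
  have d0: "N (x - y) \<ge> 0" using N_nonneg Sdiff Suc by simp
  have "N (x * (x ^ n - y ^ n)) \<le> N x * N (x ^ n - y ^ n)" using N_mult Sdiff Spow Suc by simp
  also have "\<dots> \<le> 1 * N (x - y)"
    using Suc N_nonneg[of x] N_nonneg[of "x ^ n - y ^ n"] Sdiff Spow
    by (intro mult_mono) auto
  finally have a: "N (x * (x ^ n - y ^ n)) \<le> N (x - y)" by simp
  have "N ((x - y) * y ^ n) \<le> N (x - y) * N (y ^ n)" using N_mult Sdiff Spow Suc by simp
  also have "\<dots> \<le> N (x - y) * 1"
    using Suc N_pow_le1[of y n] d0 by (intro mult_left_mono) auto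
  finally have b: "N ((x - y) * y ^ n) \<le> N (x - y)" by simp
  show ?case unfolding eq
    using N_add[of "x * (x ^ n - y ^ n)" "(x - y) * y ^ n"] a b Sdiff Spow Smult Suc by force
qed

lemma lim_unique:
  assumes "\<forall>n. s n \<in> S" "a \<in> S" "b \<in> S"
    "(\<lambda>n. N (s n - a)) \<longlonglongrightarrow> 0" "(\<lambda>n. N (s n - b)) \<longlonglongrightarrow> 0"
  shows "a = b"
proof -
  have le: "N (a - b) \<le> max (N (s n - a)) (N (s n - b))" for n
    using N_tri[of a "s n" b] N_sym[of a "s n"] assms by simp
  have "(\<lambda>n. max (N (s n - a)) (N (s n - b))) \<longlonglongrightarrow> max 0 0"
    by (intro tendsto_max assms)
  then have "N (a - b) \<le> 0"
    using le by (intro LIMSEQ_le_const) auto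
  then have "N (a - b) = 0" using N_nonneg Sdiff assms by force
  then show ?thesis using N_eq0 Sdiff assms by force
qed

lemma tends0_ev: "(f \<longlonglongrightarrow> (0::real)) \<Longrightarrow> e > 0 \<Longrightarrow> \<exists>M. \<forall>n\<ge>M. f n < e"
  using LIMSEQ_D[of f 0 e] by (metis abs_less_iff diff_zero real_norm_def)

lemma lim_le:
  assumes "\<forall>n. s n \<in> S" "a \<in> S" "(\<lambda>n. N (s n - a)) \<longlonglongrightarrow> 0" "\<forall>n. N (s n) \<le> B"
  shows "N a \<le> B"
proof (rule ccontr)
  assume nle: "\<not> N a \<le> B"
  have B0: "B \<ge> 0" using assms(4) N_nonneg assms(1) by (meson order_trans)
  have le: "N a \<le> max (N (s n)) (N (s n - a))" for n
    using N_diff[of "s n" "s n - a"] assms Sdiff by simp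
  obtain n where "N (s n - a) < N a / 2"
    using tends0_ev[OF assms(3), of "N a / 2"] nle B0 by force
  moreover have "N (s n) \<le> B" using assms(4) by blast
  ultimately show False using le[of n] nle B0 by (auto simp: max_def split: if_splits)
qed

lemma lim_diff_le:
  assumes "\<forall>n. s n \<in> S" "\<forall>n. t n \<in> S" "a \<in> S" "b \<in> S"
    "(\<lambda>n. N (s n - a)) \<longlonglongrightarrow> 0" "(\<lambda>n. N (t n - b)) \<longlonglongrightarrow> 0" "\<forall>n. N (s n - t n) \<le> B"
  shows "N (a - b) \<le> B"
proof (rule lim_le[of "\<lambda>n. s n - t n"])
  have le: "N ((s n - t n) - (a - b)) \<le> max (N (s n - a)) (N (t n - b))" for n
    using N_diff[of "s n - a" "t n - b"] assms Sdiff by (simp add: algebra_simps)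
  have lim: "(\<lambda>n. max (N (s n - a)) (N (t n - b))) \<longlonglongrightarrow> 0"
    using tendsto_max[OF assms(5) assms(6)] by simp
  have ge: "0 \<le> N (s n - t n - (a - b))" for n using N_nonneg Sdiff assms by simp
  show "(\<lambda>n. N (s n - t n - (a - b))) \<longlonglongrightarrow> 0"
    by (rule tendsto_sandwich[OF always_eventually always_eventually tendsto_const lim])
       (use le ge in auto)
qed (use assms Sdiff in auto)

end


context ultra begin

lemma ring_eq1: "(w - A * w + c * (L * (P - z + q))) - (w' - B * w' + c * (L * (P' - z' + q'))) =
   ((w - w') * (1 - A) + w' * (B - A)) + c * (L * ((P - P') - (z - z') + (q - q')))"
  for w A c L P z q w' B P' z' q' :: 'r
  by (simp add: algebra_simps)

lemma ring_eq2: "w - A * w + c * (L * (P - z + q)) = w * (1 - A) + c * (L * ((P - 1) - (z - 1) + q))"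
  for w A c L P z q :: 'r
  by (simp add: algebra_simps)

definition Tm :: "'r \<Rightarrow> ('r \<Rightarrow> 'r) \<Rightarrow> 'r \<Rightarrow> 'r" where
  "Tm L QQ w = w - (1 + w) ^ pp * w + of_nat pp * (L * ((1 + w) ^ (pp + 1) - (1 + w) + QQ (1 + w)))"

lemma N_1w: "w \<in> S \<Longrightarrow> N w \<le> 1 \<Longrightarrow> N (1 + w) \<le> 1"
  using N_add[of 1 w] S1 N_one by simp

lemma N_mult_le: "x \<in> S \<Longrightarrow> y \<in> S \<Longrightarrow> N x \<le> a \<Longrightarrow> N y \<le> b \<Longrightarrow> N (x * y) \<le> a * b"
  using N_mult[of x y] N_nonneg[of x] N_nonneg[of y]
  by (meson mult_mono order_trans)

lemma N_pL: "L \<in> S \<Longrightarrow> N L \<le> 1 \<Longrightarrow> x \<in> S \<Longrightarrow> N (of_nat pp * (L * x)) \<le> N x / pp"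
proof -
  assume a: "L \<in> S" "N L \<le> 1" "x \<in> S"
  have "N (of_nat pp * (L * x)) \<le> N (L * x) / pp" using N_p Smult a by blast
  also have "\<dots> \<le> N x / pp"
    using N_mult_le[of L x 1 "N x"] a by (intro divide_right_mono) auto
  finally show ?thesis .
qed

lemma maxle: "a \<le> max b c \<Longrightarrow> b \<le> d \<Longrightarrow> c \<le> d \<Longrightarrow> (a::real) \<le> d"
  by (meson max.boundedI order_trans)

lemma Tm_contr:
  assumes L: "L \<in> S" "N L \<le> 1" and w: "w \<in> S" "N w \<le> r" and w': "w' \<in> S" "N w' \<le> r"
    and r: "r \<le> 1"
    and QS: "QQ (1 + w) \<in> S" "QQ (1 + w') \<in> S"
    and Qlip: "N (QQ (1 + w) - QQ (1 + w')) \<le> N (w - w')"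
  shows "N (Tm L QQ w - Tm L QQ w') \<le> max r (1 / pp) * N (w - w')"
proof -
  define z where "z = 1 + w"
  define z' where "z' = 1 + w'"
  define d where "d = N (w - w')"
  define P where "P = z ^ (pp + 1)"
  define P' where "P' = z' ^ (pp + 1)"
  define A where "A = z ^ pp"
  define B where "B = z' ^ pp"
  have zS: "z \<in> S" "z' \<in> S" using w w' S1 Sadd z_def z'_def by auto
  have zN: "N z \<le> 1" "N z' \<le> 1" using N_1w w w' r z_def z'_def by auto
  have PS: "P \<in> S" "P' \<in> S" "A \<in> S" "B \<in> S" unfolding P_def P'_def A_def B_def using Spow zS by blast+
  have wwS: "w - w' \<in> S" using Sdiff w w' by auto
  have d0: "d \<ge> 0" using N_nonneg wwS d_def by auto
  have zz: "z - z' = w - w'" by (simp add: z_def z'_def)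
  have QS': "QQ z \<in> S" "QQ z' \<in> S" using QS z_def z'_def by auto
  have eq: "Tm L QQ w - Tm L QQ w' = ((w - w') * (1 - A) + w' * (B - A))
     + of_nat pp * (L * ((P - P') - (z - z') + (QQ z - QQ z')))"
    unfolding Tm_def z_def[symmetric] z'_def[symmetric] P_def P'_def A_def B_def by (rule ring_eq1)
  have one_A: "1 - A \<in> S" using Sdiff S1 PS by auto
  have BA: "B - A \<in> S" using Sdiff PS by auto
  have "N (1 - A) = N (A - 1 ^ pp)" using N_sym[OF S1 PS(3)] by simp
  also have "\<dots> \<le> N (z - 1)" using N_pow_diff[OF zS(1) S1 zN(1) N_one] A_def by simp
  also have "\<dots> \<le> r" using w z_def by simp
  finally have NA: "N (1 - A) \<le> r" .
  have A: "N ((w - w') * (1 - A)) \<le> d * r"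
    using N_mult_le[OF wwS one_A order.refl NA] unfolding d_def .
  have "N (B - A) = N (A - B)" using N_sym PS by simp
  also have "\<dots> \<le> d" using N_pow_diff[OF zS zN, of pp] zz d_def A_def B_def by simp
  finally have NB: "N (B - A) \<le> d" .
  have B: "N (w' * (B - A)) \<le> r * d"
    using N_mult_le[OF w'(1) BA w'(2) NB] .
  have C1: "N (P - P') \<le> d" using N_pow_diff[OF zS zN, of "pp+1"] zz d_def P_def P'_def by simp
  have PPS: "P - P' \<in> S" using Sdiff PS by auto
  have zzS: "z - z' \<in> S" using Sdiff zS by auto
  have N_zz: "N (z - z') \<le> d" using zz d_def by simp
  have C2S: "(P - P') - (z - z') \<in> S" by (rule Sdiff[OF PPS zzS])
  have C2: "N ((P - P') - (z - z')) \<le> d"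
    using maxle[OF N_diff[OF PPS zzS] C1 N_zz] .
  have QQS: "QQ z - QQ z' \<in> S" using Sdiff QS' by auto
  have NQQ: "N (QQ z - QQ z') \<le> d" using Qlip z_def z'_def d_def by simp
  have CS: "(P - P') - (z - z') + (QQ z - QQ z') \<in> S" using Sadd C2S QQS by auto
  have C: "N ((P - P') - (z - z') + (QQ z - QQ z')) \<le> d"
    using maxle[OF N_add[OF C2S QQS] C2 NQQ] .
  have pp0: "real pp > 0" using pp_gt by simp
  have D: "N (of_nat pp * (L * ((P - P') - (z - z') + (QQ z - QQ z')))) \<le> d / pp"
    using N_pL[OF L CS] C pp0 by (meson divide_right_mono less_imp_le order_trans)
  have AS: "(w - w') * (1 - A) \<in> S" using Smult wwS one_A by auto
  have BS: "w' * (B - A) \<in> S" using Smult w' BA by auto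
  have AB: "N ((w - w') * (1 - A) + w' * (B - A)) \<le> r * d"
    by (rule maxle[OF N_add[OF AS BS]]) (use A B in \<open>auto simp: mult.commute\<close>)
  have ABS: "(w - w') * (1 - A) + w' * (B - A) \<in> S" using Sadd AS BS by auto
  have DS: "of_nat pp * (L * ((P - P') - (z - z') + (QQ z - QQ z'))) \<in> S"
    using Smult Snat L CS by simp
  have "N (Tm L QQ w - Tm L QQ w') \<le> max (r * d) (d / pp)"
    unfolding eq by (rule maxle[OF N_add[OF ABS DS]]) (use AB D in auto)
  also have "\<dots> = max r (1 / pp) * d" using d0 by (simp add: max_mult_distrib_right)
  finally show ?thesis by (simp add: d_def)
qed

lemma Tm_ball:
  assumes L: "L \<in> S" "N L \<le> 1" and w: "w \<in> S" "N w \<le> r"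
    and r: "r \<le> 1"
    and QS: "QQ (1 + w) \<in> S"
    and Qb: "N (QQ (1 + w)) \<le> real pp * r"
  shows "N (Tm L QQ w) \<le> r"
proof -
  define z where "z = 1 + w"
  define P where "P = z ^ (pp + 1)"
  define A where "A = z ^ pp"
  have zS: "z \<in> S" using w S1 Sadd z_def by auto
  have zN: "N z \<le> 1" using N_1w w r z_def by auto
  have PS: "P \<in> S" "A \<in> S" unfolding P_def A_def using Spow zS by blast+
  have r0: "r \<ge> 0" using w N_nonneg order_trans by blast
  have pp0: "real pp > 0" using pp_gt by simp
  have QS': "QQ z \<in> S" using QS z_def by simp
  have eq: "Tm L QQ w = w * (1 - A) + of_nat pp * (L * ((P - 1) - (z - 1) + QQ z))"
    unfolding Tm_def z_def[symmetric] P_def A_def by (rule ring_eq2)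
  have one_A: "1 - A \<in> S" using Sdiff S1 PS by auto
  have "N (1 - A) = N (A - 1 ^ pp)" using N_sym[OF S1 PS(2)] by simp
  also have "\<dots> \<le> N (z - 1)" using N_pow_diff[OF zS S1 zN N_one] A_def by simp
  also have "\<dots> \<le> r" using w z_def by simp
  finally have "N (1 - A) \<le> 1" using r by simp
  from N_mult_le[OF w(1) one_A w(2) this] have A: "N (w * (1 - A)) \<le> r" by simp
  have z1: "N (z - 1) \<le> r" using w z_def by simp
  have C1: "N (P - 1) \<le> r"
    using N_pow_diff[OF zS S1 zN N_one, of "pp+1"] z1 P_def by simp
  have P1S: "P - 1 \<in> S" "z - 1 \<in> S" using Sdiff PS zS S1 by auto
  have C2S: "(P - 1) - (z - 1) \<in> S" by (rule Sdiff[OF P1S])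
  have C2: "N ((P - 1) - (z - 1)) \<le> r"
    using maxle[OF N_diff[OF P1S] C1 z1] .
  have CS: "(P - 1) - (z - 1) + QQ z \<in> S" using Sadd C2S QS' by auto
  have rp: "r \<le> real pp * r" using r0 pp_gt by (simp add: mult_le_cancel_right1)
  have C: "N ((P - 1) - (z - 1) + QQ z) \<le> real pp * r"
    by (rule maxle[OF N_add[OF C2S QS']]) (use C2 rp Qb z_def in auto)
  have D: "N (of_nat pp * (L * ((P - 1) - (z - 1) + QQ z))) \<le> r"
  proof -
    have "N (of_nat pp * (L * ((P - 1) - (z - 1) + QQ z))) \<le> (real pp * r) / pp"
      using N_pL[OF L CS] C pp0 by (meson divide_right_mono less_imp_le order_trans)
    then show ?thesis using pp0 by simp
  qed
  have AS: "w * (1 - A) \<in> S" using Smult w one_A by auto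
  have DS: "of_nat pp * (L * ((P - 1) - (z - 1) + QQ z)) \<in> S" using Smult Snat L CS by auto
  show ?thesis unfolding eq
    by (rule maxle[OF N_add[OF AS DS]]) (use A D in auto)
qed

lemma Tm_S: "L \<in> S \<Longrightarrow> w \<in> S \<Longrightarrow> QQ (1 + w) \<in> S \<Longrightarrow> Tm L QQ w \<in> S"
  unfolding Tm_def using S1 Sadd Sdiff Smult Spow Snat by simp

lemma banach:
  assumes T: "\<And>w. w \<in> S \<Longrightarrow> N w \<le> r \<Longrightarrow> T w \<in> S \<and> N (T w) \<le> r"
    and C: "\<And>w w'. w \<in> S \<Longrightarrow> N w \<le> r \<Longrightarrow> w' \<in> S \<Longrightarrow> N w' \<le> r \<Longrightarrow>
        N (T w - T w') \<le> th * N (w - w')"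
    and th: "0 \<le> th" "th < 1" and r: "0 \<le> r"
  shows "\<exists>w. w \<in> S \<and> N w \<le> r \<and> T w = w"
proof -
  define s where "s k = (T ^^ k) 0" for k
  have sB: "s k \<in> S \<and> N (s k) \<le> r" for k
    by (induction k) (auto simp: s_def S0 N_zero r T)
  have step: "N (s (Suc k) - s k) \<le> th ^ k * r" for k
  proof (induction k)
    case 0
    have "N (s 1 - s 0) = N (s 1)" by (simp add: s_def)
    then show ?case using sB[of 1] by simp
  next
    case (Suc k)
    have "N (s (Suc (Suc k)) - s (Suc k)) = N (T (s (Suc k)) - T (s k))" by (simp add: s_def)
    also have "\<dots> \<le> th * N (s (Suc k) - s k)" using C sB by blast
    also have "\<dots> \<le> th * (th ^ k * r)" using Suc th by (intro mult_left_mono) auto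
    finally show ?case by simp
  qed
  have far: "N (s (k + j) - s k) \<le> th ^ k * r" for k j
  proof (induction j)
    case 0 then show ?case using N_zero th r by simp
  next
    case (Suc j)
    have "N (s (k + Suc j) - s k) \<le> max (N (s (Suc (k + j)) - s (k + j))) (N (s (k + j) - s k))"
      using N_tri sB by simp
    also have "\<dots> \<le> th ^ k * r"
    proof -
      have "th ^ (k + j) \<le> th ^ k" using th by (simp add: power_decreasing)
      then have "th ^ (k + j) * r \<le> th ^ k * r" using r by (simp add: mult_right_mono)
      then show ?thesis using step[of "k + j"] Suc by simp
    qed
    finally show ?case .
  qed
  have "(\<lambda>k. th ^ k) \<longlonglongrightarrow> 0" using LIMSEQ_power_zero[of th] th by simp
  from tendsto_mult[OF this tendsto_const[of r]]
  have pw: "(\<lambda>k. th ^ k * r) \<longlonglongrightarrow> 0" by simp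
  have cauchy: "\<forall>e>0. \<exists>M. \<forall>m\<ge>M. \<forall>n\<ge>M. N (s m - s n) < e"
  proof (intro allI impI)
    fix e :: real assume "e > 0"
    then obtain M where M: "\<forall>k\<ge>M. th ^ k * r < e" using tends0_ev[OF pw] by blast
    have "N (s m - s n) < e" if "m \<ge> M" "n \<ge> M" for m n
    proof (cases "m \<le> n")
      case True
      then have "N (s n - s m) \<le> th ^ m * r" using far[of m "n - m"] by simp
      then show ?thesis using N_sym sB M that by fastforce
    next
      case False
      then have "N (s m - s n) \<le> th ^ n * r" using far[of n "m - n"] by simp
      then show ?thesis using M that by fastforce
    qed
    then show "\<exists>M. \<forall>m\<ge>M. \<forall>n\<ge>M. N (s m - s n) < e" by blast
  qed
  obtain l where l: "l \<in> S" "(\<lambda>n. N (s n - l)) \<longlonglongrightarrow> 0"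
    using complete[of s] sB cauchy by blast
  have lr: "N l \<le> r" using lim_le[of s l r] l sB by blast
  have Tl: "T l \<in> S" using T l lr by blast
  have le: "N (T l - l) \<le> max (th * N (s k - l)) (N (s (Suc k) - l))" for k
  proof -
    have "N (T l - l) \<le> max (N (T l - T (s k))) (N (T (s k) - l))"
      using N_tri[of "T l" "T (s k)" l] Tl T sB l by blast
    moreover have "N (T l - T (s k)) \<le> th * N (s k - l)"
      using C[of l "s k"] l lr sB N_sym by (metis Tl)
    moreover have "T (s k) = s (Suc k)" by (simp add: s_def)
    ultimately show ?thesis by (auto simp: max_def split: if_splits)
  qed
  have "(\<lambda>k. max (th * N (s k - l)) (N (s (Suc k) - l))) \<longlonglongrightarrow> max (th * 0) 0"
    by (intro tendsto_max tendsto_mult_left l(2) LIMSEQ_Suc[OF l(2)])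
  then have "N (T l - l) \<le> 0" using le by (intro LIMSEQ_le_const) auto
  then have "T l - l = 0" using N_eq0 N_nonneg Sdiff Tl l by (meson antisym)
  then show ?thesis using l lr by auto
qed

lemma contr_unique:
  assumes "w \<in> S" "w' \<in> S" "N (w - w') \<le> th * N (w - w')" "th < 1"
  shows "w = w'"
proof -
  have "N (w - w') \<ge> 0" using N_nonneg Sdiff assms by simp
  then have "N (w - w') = 0" using assms(3,4)
    by (metis less_eq_real_def mult_less_cancel_right2 not_le)
  then show ?thesis using N_eq0 Sdiff assms by force
qed

end


locale cpset =
  fixes p :: nat and av :: "'a::field_char_0 \<Rightarrow> real"
  assumes Cp: "is_Cp p av"
begin

lemma prime_p: "prime p" using Cp by (simp add: is_Cp_def)
lemma p_gt1: "p > 1" using prime_p prime_gt_1_nat by blast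
lemma av_nonneg: "av x \<ge> 0" using Cp by (simp add: is_Cp_def)
lemma av_eq0: "av x = 0 \<longleftrightarrow> x = 0" using Cp by (simp add: is_Cp_def)
lemma av_mult: "av (x * y) = av x * av y" using Cp by (simp add: is_Cp_def)
lemma av_add: "av (x + y) \<le> max (av x) (av y)" using Cp by (simp add: is_Cp_def)
lemma av_p: "av (of_nat p) = 1 / real p" using Cp by (simp add: is_Cp_def)
lemma av_complete: "(\<forall>e>0. \<exists>M. \<forall>m\<ge>M. \<forall>n\<ge>M. av (s m - s n) < e)
          \<Longrightarrow> (\<exists>l. (\<lambda>n. av (s n - l)) \<longlonglongrightarrow> 0)"
  using Cp unfolding is_Cp_def by blast

lemma av_0[simp]: "av 0 = 0" using av_eq0 by simp

lemma av_1[simp]: "av 1 = 1"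
proof -
  have "av 1 = av 1 * av 1" using av_mult[of 1 1] by simp
  moreover have "av 1 \<noteq> 0" using av_eq0 by simp
  ultimately show ?thesis by (metis mult_cancel_right1)
qed

lemma av_neg[simp]: "av (- x) = av x"
proof -
  have "av (-1) ^ 2 = 1" using av_mult[of "-1" "-1"] by (simp add: power2_eq_square)
  then have "av (-1) = 1" using av_nonneg[of "-1"] power2_eq_1_iff by force
  then show ?thesis using av_mult[of "-1" x] by simp
qed

lemma av_pow: "av (x ^ n) = av x ^ n"
  by (induction n) (auto simp: av_mult)

lemma av_divide: "av (x / y) = av x / av y"
proof (cases "y = 0")
  case False
  have "av (x / y) * av y = av x" using av_mult[of "x / y" y] False by simp
  moreover have "av y \<noteq> 0" using False av_eq0 by simp
  ultimately show ?thesis by (simp add: field_simps)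
qed simp

lemma av_of_nat_le: "av (of_nat n) \<le> 1"
proof (induction n)
  case (Suc n)
  then show ?case using av_add[of 1 "of_nat n"] by (simp add: add.commute)
qed simp

lemma av_strict: "av x < av y \<Longrightarrow> av (x + y) = av y"
proof -
  assume a: "av x < av y"
  have "av (x + y) \<le> av y" using av_add[of x y] a by simp
  moreover have "av y \<le> max (av (x + y)) (av x)" using av_add[of "x + y" "- x"] by simp
  ultimately show ?thesis using a by (auto simp: max_def split: if_splits)
qed

sublocale C: ultra UNIV av p
proof unfold_locales
  show "av (of_nat p * x) \<le> av x / real p" for x
    using av_mult av_p by simp
  show "\<exists>l\<in>UNIV. (\<lambda>n. av (s n - l)) \<longlonglongrightarrow> 0"
    if "\<forall>e>0. \<exists>M. \<forall>m\<ge>M. \<forall>n\<ge>M. av (s m - s n) < e" for s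
    using av_complete that by blast
qed (use p_gt1 in \<open>auto simp: av_nonneg av_eq0 av_add av_mult\<close>)

end



definition fnrm :: "('a::field \<Rightarrow> real) \<Rightarrow> 'a fps \<Rightarrow> real" where
  "fnrm av A = (SUP n. av (A $ n))"

definition fbd :: "('a::field \<Rightarrow> real) \<Rightarrow> 'a fps \<Rightarrow> bool" where
  "fbd av A \<longleftrightarrow> bdd_above (range (\<lambda>n. av (A $ n)))"

context cpset begin

lemma fnrm_ge: "fbd av A \<Longrightarrow> av (A $ n) \<le> fnrm av A"
  unfolding fnrm_def fbd_def by (rule cSUP_upper) auto

lemma fnrm_le: "(\<And>n. av (A $ n) \<le> B) \<Longrightarrow> fnrm av A \<le> B"
  unfolding fnrm_def by (rule cSUP_least) auto

lemma fbdI: "(\<And>n. av (A $ n) \<le> B) \<Longrightarrow> fbd av A"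
  unfolding fbd_def by (rule bdd_aboveI2) auto

lemma fnrm_nonneg: "fbd av A \<Longrightarrow> fnrm av A \<ge> 0"
  using fnrm_ge[of A 0] av_nonneg[of "A $ 0"] by linarith

lemma fbd_add: "fbd av A \<Longrightarrow> fbd av B \<Longrightarrow> fbd av (A + B) \<and> fnrm av (A + B) \<le> max (fnrm av A) (fnrm av B)"
proof -
  assume a: "fbd av A" "fbd av B"
  have "av ((A + B) $ n) \<le> max (fnrm av A) (fnrm av B)" for n
    using av_add[of "A $ n" "B $ n"] fnrm_ge[OF a(1), of n] fnrm_ge[OF a(2), of n] by auto
  then show ?thesis using fbdI fnrm_le by blast
qed

lemma fbd_neg: "fbd av A \<Longrightarrow> fbd av (- A) \<and> fnrm av (- A) = fnrm av A"
  unfolding fbd_def fnrm_def by simp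

lemma fbd_mult: "fbd av A \<Longrightarrow> fbd av B \<Longrightarrow> fbd av (A * B) \<and> fnrm av (A * B) \<le> fnrm av A * fnrm av B"
proof -
  assume a: "fbd av A" "fbd av B"
  have "av ((A * B) $ n) \<le> fnrm av A * fnrm av B" for n
    unfolding fps_mult_nth
  proof (rule C.N_sum_le)
    fix i show "av (A $ i * B $ (n - i)) \<le> fnrm av A * fnrm av B"
      unfolding av_mult using fnrm_ge[OF a(1)] fnrm_ge[OF a(2)] av_nonneg fnrm_nonneg a
      by (intro mult_mono) auto
  qed (use a fnrm_nonneg in auto)
  then show ?thesis using fbdI fnrm_le by blast
qed

lemma fbd_const: "fbd av (fps_const c) \<and> fnrm av (fps_const c) \<le> av c"
proof -
  have "av (fps_const c $ n) \<le> av c" for n by (cases n) (auto simp: av_nonneg)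
  then show ?thesis using fbdI fnrm_le by blast
qed

lemma fbd_X: "fbd av fps_X \<and> fnrm av fps_X \<le> 1"
proof -
  have "av (fps_X $ n) \<le> 1" for n by (auto simp: fps_X_def)
  then show ?thesis using fbdI fnrm_le by blast
qed

lemma fbd_complete:
  fixes s :: "nat \<Rightarrow> 'a fps"
  assumes s: "\<forall>n. s n \<in> {A. fbd av A}"
    and cau: "\<forall>e>0. \<exists>M. \<forall>m\<ge>M. \<forall>n\<ge>M. fnrm av (s m - s n) < e"
  shows "\<exists>l\<in>{A. fbd av A}. (\<lambda>n. fnrm av (s n - l)) \<longlonglongrightarrow> 0"
proof -
  have sd: "fbd av (s m - s k)" for m k
    using s fbd_add[of "s m" "- s k"] fbd_neg[of "s k"] by auto
  have coef_le: "av (s m $ n - s k $ n) \<le> fnrm av (s m - s k)" for m k n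
    using fnrm_ge[OF sd[of m k], of n] by simp
  have "\<exists>l. (\<lambda>k. av (s k $ n - l)) \<longlonglongrightarrow> 0" for n
  proof (rule av_complete, intro allI impI)
    fix e :: real assume "e > 0"
    then obtain M where "\<forall>m\<ge>M. \<forall>k\<ge>M. fnrm av (s m - s k) < e" using cau by blast
    then show "\<exists>M. \<forall>m\<ge>M. \<forall>k\<ge>M. av (s m $ n - s k $ n) < e"
      using coef_le by (meson le_less_trans)
  qed
  then obtain c where c: "\<And>n. (\<lambda>k. av (s k $ n - c n)) \<longlonglongrightarrow> 0" by metis
  define l where "l = Abs_fps c"
  have unif: "\<exists>K. \<forall>m\<ge>K. \<forall>n. av (s m $ n - l $ n) \<le> e" if "e > 0" for e
  proof -
    obtain K where K: "\<forall>m\<ge>K. \<forall>k\<ge>K. fnrm av (s m - s k) < e" using cau \<open>e>0\<close> by blast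
    have "av (s m $ n - l $ n) \<le> e" if "m \<ge> K" for m n
    proof -
      obtain k0 where k0: "\<forall>k\<ge>k0. av (s k $ n - c n) < e"
        using C.tends0_ev[OF c[of n] \<open>e>0\<close>] by blast
      define k where "k = max k0 K"
      have "av (s m $ n - c n) \<le> max (av (s m $ n - s k $ n)) (av (s k $ n - c n))"
        using C.N_tri by simp
      moreover have "av (s m $ n - s k $ n) < e" using coef_le K that k_def
        by (meson le_less_trans max.cobounded2)
      moreover have "av (s k $ n - c n) < e" using k0 k_def by simp
      ultimately show ?thesis by (simp add: l_def)
    qed
    then show ?thesis by blast
  qed
  obtain K1 where K1: "\<forall>m\<ge>K1. \<forall>n. av (s m $ n - l $ n) \<le> 1" using unif[of 1] by auto
  have "av (l $ n) \<le> max (fnrm av (s K1)) 1" for n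
  proof -
    have "av (l $ n) = av (s K1 $ n - (s K1 $ n - l $ n))" by simp
    also have "\<dots> \<le> max (av (s K1 $ n)) (av (s K1 $ n - l $ n))" by (rule C.N_diff) auto
    also have "\<dots> \<le> max (fnrm av (s K1)) 1"
    proof (rule max.mono)
      show "av (s K1 $ n) \<le> fnrm av (s K1)" using fnrm_ge[of "s K1" n] s by blast
      show "av (s K1 $ n - l $ n) \<le> 1" using K1 by blast
    qed
    finally show ?thesis .
  qed
  then have lb: "fbd av l" by (rule fbdI)
  have dl: "fbd av (s m - l)" for m
    using s fbd_add[of "s m" "- l"] fbd_neg[of l] lb by auto
  have "(\<lambda>m. fnrm av (s m - l)) \<longlonglongrightarrow> 0"
  proof (rule LIMSEQ_I)
    fix r :: real assume "r > 0"
    then obtain K where K: "\<forall>m\<ge>K. \<forall>n. av (s m $ n - l $ n) \<le> r / 2" using unif[of "r/2"] by auto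
    have "norm (fnrm av (s m - l) - 0) < r" if "m \<ge> K" for m
    proof -
      have "fnrm av (s m - l) \<le> r / 2" using K that by (intro fnrm_le) simp
      then show ?thesis using fnrm_nonneg[OF dl[of m]] \<open>r > 0\<close> by simp
    qed
    then show "\<exists>K. \<forall>m\<ge>K. norm (fnrm av (s m - l) - 0) < r" by blast
  qed
  then show ?thesis using lb by blast
qed

lemma fbd_fnrm_0: "fnrm av 0 = 0"
proof -
  have "fnrm av 0 \<le> 0" by (rule fnrm_le) simp
  moreover have "fbd av 0" by (rule fbdI[of _ 0]) simp
  ultimately show ?thesis using fnrm_nonneg by (meson antisym)
qed

sublocale F: ultra "{A. fbd av A}" "fnrm av" p
proof unfold_locales
  show "0 \<in> {A. fbd av A}" using fbdI[of 0 0] by simp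
  show "1 \<in> {A. fbd av A}" using fbd_const[of 1] by (simp add: fps_const_1_eq_1[symmetric] del: fps_const_1_eq_1)
  show "fnrm av 1 \<le> 1" using fbd_const[of 1] by (simp add: fps_const_1_eq_1[symmetric] del: fps_const_1_eq_1)
  show "fnrm av 0 = 0" by (rule fbd_fnrm_0)
  show "1 < p" by (rule p_gt1)
  fix x y assume x: "x \<in> {A. fbd av A}"
  show "x + y \<in> {A. fbd av A}" if "y \<in> {A. fbd av A}" using fbd_add x that by auto
  show "- x \<in> {A. fbd av A}" using fbd_neg x by auto
  show "x * y \<in> {A. fbd av A}" if "y \<in> {A. fbd av A}" using fbd_mult x that by auto
  show "0 \<le> fnrm av x" using fnrm_nonneg x by auto
  show "fnrm av (x + y) \<le> max (fnrm av x) (fnrm av y)" if "y \<in> {A. fbd av A}" using fbd_add x that by auto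
  show "fnrm av (- x) = fnrm av x" using fbd_neg x by auto
  show "fnrm av (x * y) \<le> fnrm av x * fnrm av y" if "y \<in> {A. fbd av A}" using fbd_mult x that by auto
  show "x = 0" if "fnrm av x = 0"
  proof (rule fps_ext)
    fix n have "av (x $ n) \<le> 0" using fnrm_ge[of x n] x that by auto
    then show "x $ n = 0 $ n" using av_nonneg[of "x $ n"] av_eq0 by simp
  qed
  show "fnrm av (of_nat p * x) \<le> fnrm av x / real p"
  proof (rule fnrm_le)
    fix n
    have "av ((of_nat p * x) $ n) = av (x $ n) / real p"
      by (simp add: fps_of_nat[symmetric] av_mult av_p del: fps_of_nat)
    also have "\<dots> \<le> fnrm av x / real p" using fnrm_ge[of x n] x p_gt1 by (simp add: divide_right_mono)
    finally show "av ((of_nat p * x) $ n) \<le> fnrm av x / real p" .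
  qed
next
  fix s :: "nat \<Rightarrow> 'a fps" assume "\<forall>n. s n \<in> {A. fbd av A}" "\<forall>e>0. \<exists>M. \<forall>m\<ge>M. \<forall>n\<ge>M. fnrm av (s m - s n) < e"
  then show "\<exists>l\<in>{A. fbd av A}. (\<lambda>n. fnrm av (s n - l)) \<longlonglongrightarrow> 0" by (rule fbd_complete)
qed

end



context ultra begin

lemma lim_add:
  assumes "\<forall>n. s n \<in> S" "\<forall>n. t n \<in> S" "a \<in> S" "b \<in> S"
    "(\<lambda>n. N (s n - a)) \<longlonglongrightarrow> 0" "(\<lambda>n. N (t n - b)) \<longlonglongrightarrow> 0"
  shows "(\<lambda>n. N ((s n + t n) - (a + b))) \<longlonglongrightarrow> 0"
proof -
  have le: "N ((s n + t n) - (a + b)) \<le> max (N (s n - a)) (N (t n - b))" for n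
    using N_add[of "s n - a" "t n - b"] assms Sdiff by (simp add: algebra_simps)
  have lim: "(\<lambda>n. max (N (s n - a)) (N (t n - b))) \<longlonglongrightarrow> 0"
    using tendsto_max[OF assms(5) assms(6)] by simp
  have ge: "0 \<le> N ((s n + t n) - (a + b))" for n using N_nonneg Sdiff Sadd assms by simp
  show ?thesis
    by (rule tendsto_sandwich[OF always_eventually always_eventually tendsto_const lim])
       (use le ge in auto)
qed

lemma lim_neg:
  assumes "\<forall>n. s n \<in> S" "a \<in> S" "(\<lambda>n. N (s n - a)) \<longlonglongrightarrow> 0"
  shows "(\<lambda>n. N (- s n - (- a))) \<longlonglongrightarrow> 0"
proof -
  have "N (- s n - (- a)) = N (s n - a)" for n
    using N_neg[of "s n - a"] assms Sdiff by (simp add: algebra_simps)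
  then show ?thesis using assms(3) by simp
qed

lemma lim_close:
  assumes "\<forall>n. s n \<in> S" "\<forall>n. t n \<in> S" "a \<in> S"
    "(\<lambda>n. N (s n - a)) \<longlonglongrightarrow> 0" "(\<lambda>n. N (s n - t n)) \<longlonglongrightarrow> 0"
  shows "(\<lambda>n. N (t n - a)) \<longlonglongrightarrow> 0"
proof -
  have le: "N (t n - a) \<le> max (N (s n - t n)) (N (s n - a))" for n
    using N_tri[of "t n" "s n" a] N_sym[of "t n" "s n"] assms by simp
  have lim: "(\<lambda>n. max (N (s n - t n)) (N (s n - a))) \<longlonglongrightarrow> 0"
    using tendsto_max[OF assms(5) assms(4)] by simp
  have ge: "0 \<le> N (t n - a)" for n using N_nonneg Sdiff assms by simp
  show ?thesis
    by (rule tendsto_sandwich[OF always_eventually always_eventually tendsto_const lim])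
       (use le ge in auto)
qed

lemma series_conv:
  assumes xS: "\<forall>i. x i \<in> S" and x0: "(\<lambda>i. N (x i)) \<longlonglongrightarrow> 0"
  shows "\<exists>l\<in>S. (\<lambda>n. N ((\<Sum>i<n. x i) - l)) \<longlonglongrightarrow> 0"
proof (rule complete)
  show "\<forall>n. (\<Sum>i<n. x i) \<in> S" using xS by (auto intro: Ssum)
  show "\<forall>e>0. \<exists>M. \<forall>m\<ge>M. \<forall>n\<ge>M. N ((\<Sum>i<m. x i) - (\<Sum>i<n. x i)) < e"
  proof (intro allI impI)
    fix e :: real assume e: "e > 0"
    then obtain M where M: "\<forall>i\<ge>M. N (x i) < e / 2" using tends0_ev[OF x0, of "e/2"] by auto
    have key: "N ((\<Sum>i<m. x i) - (\<Sum>i<n. x i)) \<le> e / 2" if "n \<le> m" "n \<ge> M" for m n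
    proof -
      have "(\<Sum>i<m. x i) - (\<Sum>i<n. x i) = (\<Sum>i\<in>{n..<m}. x i)"
        using sum_diff_nat_ivl[of 0 n m x] that by (simp add: atLeast0LessThan)
      also have "N \<dots> \<le> e / 2"
        by (rule N_sum_le) (use xS M that e in \<open>auto intro: less_imp_le\<close>)
      finally show ?thesis .
    qed
    have "N ((\<Sum>i<m. x i) - (\<Sum>i<n. x i)) < e" if "m \<ge> M" "n \<ge> M" for m n
    proof (cases "n \<le> m")
      case True then show ?thesis using key[of n m] that e by simp
    next
      case False
      then have "N ((\<Sum>i<n. x i) - (\<Sum>i<m. x i)) \<le> e / 2" using key[of m n] that by simp
      moreover have "(\<Sum>i<n. x i) \<in> S" "(\<Sum>i<m. x i) \<in> S" using xS by (auto intro: Ssum)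
      ultimately show ?thesis using N_sym[of "\<Sum>i<n. x i" "\<Sum>i<m. x i"] e by simp
    qed
    then show "\<exists>M. \<forall>m\<ge>M. \<forall>n\<ge>M. N ((\<Sum>i<m. x i) - (\<Sum>i<n. x i)) < e" by blast
  qed
qed

end

context cpset begin

lemma fbd_simps [simp]:
  "fbd av A \<Longrightarrow> fbd av B \<Longrightarrow> fbd av (A + B)"
  "fbd av A \<Longrightarrow> fbd av B \<Longrightarrow> fbd av (A - B)"
  "fbd av A \<Longrightarrow> fbd av B \<Longrightarrow> fbd av (A * B)"
  "fbd av A \<Longrightarrow> fbd av (- A)"
  "fbd av A \<Longrightarrow> fbd av (A ^ n)"
  "fbd av 0" "fbd av 1" "fbd av (fps_const c)" "fbd av (of_nat n)" "fbd av fps_X"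
  using F.Sadd F.Sdiff F.Smult F.Sneg F.Spow F.S0 F.S1 F.Snat fbd_const fbd_X by auto

definition psum :: "'a fps \<Rightarrow> 'a \<Rightarrow> nat \<Rightarrow> 'a" where
  "psum A m n = (\<Sum>i<n. A $ i * m ^ i)"

definition ev :: "'a \<Rightarrow> 'a fps \<Rightarrow> 'a" where
  "ev m A = (SOME v. (\<lambda>n. av (psum A m n - v)) \<longlonglongrightarrow> 0)"

lemma term_bound: "fbd av A \<Longrightarrow> av (A $ i * m ^ i) \<le> fnrm av A * av m ^ i"
  unfolding av_mult av_pow using fnrm_ge av_nonneg by (intro mult_right_mono) auto

lemma ev_conv:
  assumes A: "fbd av A" and m: "av m < 1"
  shows "(\<lambda>n. av (psum A m n - ev m A)) \<longlonglongrightarrow> 0"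
proof -
  have pw: "(\<lambda>i. fnrm av A * av m ^ i) \<longlonglongrightarrow> 0"
    using tendsto_mult_right_zero[OF LIMSEQ_power_zero[of "av m"]] m av_nonneg[of m] by simp
  have "(\<lambda>i. av (A $ i * m ^ i)) \<longlonglongrightarrow> 0"
    by (rule tendsto_sandwich[OF always_eventually always_eventually tendsto_const pw])
       (use term_bound[OF A] av_nonneg in auto)
  then obtain l where "(\<lambda>n. av ((\<Sum>i<n. A $ i * m ^ i) - l)) \<longlonglongrightarrow> 0"
    using C.series_conv[of "\<lambda>i. A $ i * m ^ i"] by auto
  then have "\<exists>v. (\<lambda>n. av (psum A m n - v)) \<longlonglongrightarrow> 0" unfolding psum_def by blast
  then show ?thesis unfolding ev_def by (rule someI_ex)
qed

lemma ev_unique: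
  assumes "fbd av A" "av m < 1" "(\<lambda>n. av (psum A m n - v)) \<longlonglongrightarrow> 0"
  shows "ev m A = v"
  using C.lim_unique[of "psum A m" "ev m A" v] ev_conv assms by auto

lemma psum_le:
  assumes A: "fbd av A" and m: "av m \<le> 1"
  shows "av (psum A m n) \<le> fnrm av A"
  unfolding psum_def
proof (rule C.N_sum_le)
  fix i
  have "fnrm av A * av m ^ i \<le> fnrm av A * 1"
    using m av_nonneg[of m] fnrm_nonneg[OF A]
    by (intro mult_left_mono) (auto simp: power_le_one)
  then show "av (A $ i * m ^ i) \<le> fnrm av A" using term_bound[OF A, of i m] by simp
qed (use fnrm_nonneg[OF A] in auto)

lemma ev_le:
  assumes A: "fbd av A" and m: "av m < 1"
  shows "av (ev m A) \<le> fnrm av A"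
proof (rule C.lim_le[OF _ _ ev_conv[OF A m]])
  show "\<forall>n. av (psum A m n) \<le> fnrm av A"
  proof
    fix n
    show "av (psum A m n) \<le> fnrm av A" unfolding psum_def
    proof (rule C.N_sum_le)
      fix i
      have "fnrm av A * av m ^ i \<le> fnrm av A * 1"
        using m av_nonneg[of m] fnrm_nonneg[OF A]
        by (intro mult_left_mono) (auto simp: power_le_one)
      then show "av (A $ i * m ^ i) \<le> fnrm av A" using term_bound[OF A, of i m] by simp
    qed (use fnrm_nonneg[OF A] in auto)
  qed
qed auto

lemma ev_add:
  assumes "fbd av A" "fbd av B" "av m < 1"
  shows "ev m (A + B) = ev m A + ev m B"
proof (rule ev_unique)
  have "psum (A + B) m n = psum A m n + psum B m n" for n
    unfolding psum_def by (simp add: distrib_right sum.distrib)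
  then show "(\<lambda>n. av (psum (A + B) m n - (ev m A + ev m B))) \<longlonglongrightarrow> 0"
    using C.lim_add[OF _ _ _ _ ev_conv ev_conv, of A m B] assms by simp
qed (use assms in auto)

lemma ev_neg:
  assumes "fbd av A" "av m < 1"
  shows "ev m (- A) = - ev m A"
proof (rule ev_unique)
  have "psum (- A) m n = - psum A m n" for n
    unfolding psum_def by (simp add: sum_negf)
  then show "(\<lambda>n. av (psum (- A) m n - (- ev m A))) \<longlonglongrightarrow> 0"
    using C.lim_neg[OF _ _ ev_conv, of A m] assms by simp
qed (use assms in auto)

lemma ev_diff:
  assumes "fbd av A" "fbd av B" "av m < 1"
  shows "ev m (A - B) = ev m A - ev m B"
  using ev_add[of A "- B" m] ev_neg[of B m] assms by simp

lemma ev_const: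
  assumes "av m < 1"
  shows "ev m (fps_const c) = c"
proof (rule ev_unique)
  have "psum (fps_const c) m (Suc n) = c" for n
    unfolding psum_def by (induction n) auto
  then have "(\<lambda>n. av (psum (fps_const c) m (Suc n) - c)) \<longlonglongrightarrow> 0" by simp
  then show "(\<lambda>n. av (psum (fps_const c) m n - c)) \<longlonglongrightarrow> 0" by (rule LIMSEQ_imp_Suc)
qed (use assms in auto)

lemma ev_1: "av m < 1 \<Longrightarrow> ev m 1 = 1"
  using ev_const[of m 1] by simp

lemma ev_X:
  assumes "av m < 1"
  shows "ev m fps_X = m"
proof (rule ev_unique)
  have "psum fps_X m (Suc (Suc n)) = m" for n
    unfolding psum_def by (induction n) simp_all
  then have "(\<lambda>n. av (psum fps_X m (Suc (Suc n)) - m)) \<longlonglongrightarrow> 0" by simp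
  then have "(\<lambda>n. av (psum fps_X m (Suc n) - m)) \<longlonglongrightarrow> 0" by (rule LIMSEQ_imp_Suc)
  then show "(\<lambda>n. av (psum fps_X m n - m)) \<longlonglongrightarrow> 0" by (rule LIMSEQ_imp_Suc)
qed (use assms in auto)

lemma psum_mult_close:
  assumes A: "fbd av A" and B: "fbd av B" and m: "av m \<le> 1"
  shows "av (psum (A * B) m n - psum A m n * psum B m n) \<le> fnrm av A * fnrm av B * av m ^ n"
proof -
  define g where "g = (\<lambda>(i, j). A $ i * B $ j * m ^ (i + j))"
  define Sq where "Sq = {..<n} \<times> {..<n}"
  define Tr where "Tr = {(i, j). i + j < n}"
  have sq: "psum A m n * psum B m n = sum g Sq"
  proof -
    have "psum A m n * psum B m n = (\<Sum>i<n. \<Sum>j<n. (A $ i * m ^ i) * (B $ j * m ^ j))"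
      unfolding psum_def by (rule sum_product)
    also have "\<dots> = (\<Sum>(i, j)\<in>Sq. (A $ i * m ^ i) * (B $ j * m ^ j))"
      unfolding Sq_def by (rule sum.cartesian_product)
    also have "\<dots> = sum g Sq"
      unfolding g_def by (intro sum.cong refl) (clarsimp simp: power_add mult_ac)
    finally show ?thesis .
  qed
  have tr: "psum (A * B) m n = sum g Tr"
  proof -
    have "psum (A * B) m n = (\<Sum>k<n. \<Sum>i\<le>k. A $ i * B $ (k - i) * m ^ k)"
      unfolding psum_def fps_mult_nth sum_distrib_right atLeast0AtMost ..
    also have "\<dots> = (\<Sum>k<n. \<Sum>i\<le>k. A $ i * B $ (k - i) * m ^ (i + (k - i)))"
      by (intro sum.cong refl) simp
    also have "\<dots> = sum g Tr"
      unfolding Tr_def g_def by (rule sum.triangle_reindex[symmetric])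
    finally show ?thesis .
  qed
  have sub: "Tr \<subseteq> Sq" unfolding Tr_def Sq_def by auto
  have fin: "finite Sq" unfolding Sq_def by auto
  have sd: "sum g Sq = sum g (Sq - Tr) + sum g Tr" by (rule sum.subset_diff[OF sub fin])
  have "psum (A * B) m n - psum A m n * psum B m n = - sum g (Sq - Tr)"
    unfolding sq tr sd by simp
  also have "av \<dots> = av (sum g (Sq - Tr))" by simp
  also have "\<dots> \<le> fnrm av A * fnrm av B * av m ^ n"
  proof (rule C.N_sum_le)
    fix x assume x: "x \<in> Sq - Tr"
    obtain i j where ij0: "x = (i, j)" by (cases x)
    have ij: "x = (i, j)" "i + j \<ge> n" using x ij0 unfolding Tr_def by auto
    have "av (g x) = av (A $ i) * av (B $ j) * av m ^ (i + j)"
      unfolding g_def ij by (simp add: av_mult av_pow)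
    also have "\<dots> \<le> fnrm av A * fnrm av B * av m ^ n"
    proof (intro mult_mono)
      show "av m ^ (i + j) \<le> av m ^ n" using ij m av_nonneg[of m] by (simp add: power_decreasing)
    qed (use fnrm_ge[OF A] fnrm_ge[OF B] av_nonneg fnrm_nonneg[OF A] fnrm_nonneg[OF B] in
      \<open>auto intro: mult_nonneg_nonneg\<close>)
    finally show "av (g x) \<le> fnrm av A * fnrm av B * av m ^ n" .
  qed (use fnrm_nonneg[OF A] fnrm_nonneg[OF B] av_nonneg in auto)
  finally show ?thesis .
qed

lemma ev_mult:
  assumes A: "fbd av A" and B: "fbd av B" and m: "av m < 1"
  shows "ev m (A * B) = ev m A * ev m B"
proof (rule ev_unique)
  let ?a = "ev m A" and ?b = "ev m B"
  have ca: "(\<lambda>n. av (psum A m n - ?a)) \<longlonglongrightarrow> 0" by (rule ev_conv[OF A m])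
  have cb: "(\<lambda>n. av (psum B m n - ?b)) \<longlonglongrightarrow> 0" by (rule ev_conv[OF B m])
  define K where "K = fnrm av A"
  have pa: "av (psum A m n) \<le> K" for n unfolding K_def by (rule psum_le[OF A]) (use m in simp)
  have K0: "K \<ge> 0" unfolding K_def using fnrm_nonneg[OF A] .
  have prod: "(\<lambda>n. av (psum A m n * psum B m n - ?a * ?b)) \<longlonglongrightarrow> 0"
  proof -
    have le: "av (psum A m n * psum B m n - ?a * ?b) \<le>
        K * av (psum B m n - ?b) + av ?b * av (psum A m n - ?a)" for n
    proof -
      have "psum A m n * psum B m n - ?a * ?b = psum A m n * (psum B m n - ?b) + (psum A m n - ?a) * ?b"
        by (simp add: algebra_simps)
      then have "av (psum A m n * psum B m n - ?a * ?b) \<le>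
          max (av (psum A m n) * av (psum B m n - ?b)) (av (psum A m n - ?a) * av ?b)"
        using av_add[of "psum A m n * (psum B m n - ?b)" "(psum A m n - ?a) * ?b"] by (simp add: av_mult)
      also have "\<dots> \<le> K * av (psum B m n - ?b) + av ?b * av (psum A m n - ?a)"
      proof -
        have x1: "av (psum A m n) * av (psum B m n - ?b) \<le> K * av (psum B m n - ?b)"
          using pa[of n] av_nonneg by (intro mult_right_mono) auto
        have x2: "0 \<le> K * av (psum B m n - ?b)" "0 \<le> av ?b * av (psum A m n - ?a)"
          using K0 av_nonneg by auto
        show ?thesis using x1 x2 by (auto simp: mult.commute max_def)
      qed
      finally show ?thesis .
    qed
    have lim: "(\<lambda>n. K * av (psum B m n - ?b) + av ?b * av (psum A m n - ?a)) \<longlonglongrightarrow> K * 0 + av ?b * 0"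
      by (intro tendsto_add tendsto_mult tendsto_const ca cb)
    show ?thesis
      by (rule tendsto_sandwich[OF always_eventually always_eventually tendsto_const])
         (use le av_nonneg lim in auto)
  qed
  have pw: "(\<lambda>n. fnrm av A * fnrm av B * av m ^ n) \<longlonglongrightarrow> 0"
    using tendsto_mult_right_zero[OF LIMSEQ_power_zero[of "av m"]] m av_nonneg[of m] by simp
  have close: "(\<lambda>n. av (psum A m n * psum B m n - psum (A * B) m n)) \<longlonglongrightarrow> 0"
  proof (rule tendsto_sandwich[OF always_eventually always_eventually tendsto_const pw])
    show "\<forall>n. av (psum A m n * psum B m n - psum (A * B) m n) \<le> fnrm av A * fnrm av B * av m ^ n"
      using psum_mult_close[OF A B] m C.N_sym by (metis UNIV_I less_imp_le)
  qed (use av_nonneg in auto)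
  show "(\<lambda>n. av (psum (A * B) m n - ?a * ?b)) \<longlonglongrightarrow> 0"
    using C.lim_close[OF _ _ _ prod close] by simp
qed (use assms in auto)

lemma ev_pow:
  assumes "fbd av A" "av m < 1"
  shows "ev m (A ^ n) = ev m A ^ n"
  by (induction n) (use assms in \<open>auto simp: ev_1 ev_mult\<close>)

lemma ev_of_nat:
  assumes "av m < 1"
  shows "ev m (of_nat k) = of_nat k"
  using ev_const[OF assms, of "of_nat k"] by (simp add: fps_of_nat)

lemma ev_sum:
  assumes "\<And>i. fbd av (f i)" "av m < 1"
  shows "ev m (\<Sum>i<(n::nat). f i) = (\<Sum>i<n. ev m (f i))"
proof (induction n)
  case 0 then show ?case using ev_const[OF assms(2), of 0] by simp
next
  case (Suc n)
  have "fbd av (\<Sum>i<n. f i)" using F.Ssum[of "{..<n}" f] assms(1) by simp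
  then show ?case using Suc ev_add assms by simp
qed

lemma ev_cont:
  assumes "fbd av A" "fbd av B" "av m < 1"
  shows "av (ev m A - ev m B) \<le> fnrm av (A - B)"
  using ev_le[of "A - B" m] ev_diff[of A B m] assms by simp

end



locale qset = cpset p av for p :: nat and av :: "'a::field_char_0 \<Rightarrow> real" +
  fixes q :: "nat \<Rightarrow> 'a" and Q :: "'a \<Rightarrow> 'a" and M :: real
  assumes qM: "\<And>i. av (q i) \<le> M" and M0: "0 \<le> M" and M1: "M < 1"
    and q0: "(\<lambda>i. av (q i)) \<longlonglongrightarrow> 0"
    and Qd: "\<And>z. av z \<le> 1 \<Longrightarrow> (\<lambda>n. av ((\<Sum>i<n. q i * z ^ i) - Q z)) \<longlonglongrightarrow> 0"
begin

definition qpart :: "'a fps \<Rightarrow> nat \<Rightarrow> 'a fps" where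
  "qpart Z n = (\<Sum>i<n. fps_const (q i) * Z ^ i)"

definition QQ :: "'a fps \<Rightarrow> 'a fps" where
  "QQ Z = (SOME l. fbd av l \<and> (\<lambda>n. fnrm av (qpart Z n - l)) \<longlonglongrightarrow> 0)"

lemma fnrm_cmult: "fbd av Z \<Longrightarrow> fnrm av (fps_const c * Z) \<le> av c * fnrm av Z"
  using fbd_mult[of "fps_const c" Z] fbd_const[of c] fnrm_nonneg[of Z]
  by (meson mult_right_mono order_trans)

lemma qpart_bd: "fbd av Z \<Longrightarrow> fbd av (qpart Z n)"
  unfolding qpart_def using F.Ssum[of "{..<n}" "\<lambda>i. fps_const (q i) * Z ^ i"] by simp

lemma QQ_conv:
  assumes Z: "fbd av Z" "fnrm av Z \<le> 1"
  shows "fbd av (QQ Z) \<and> (\<lambda>n. fnrm av (qpart Z n - QQ Z)) \<longlonglongrightarrow> 0"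
proof -
  have tb: "fnrm av (fps_const (q i) * Z ^ i) \<le> av (q i)" for i
  proof -
    have "fnrm av (fps_const (q i) * Z ^ i) \<le> av (q i) * fnrm av (Z ^ i)"
      using fnrm_cmult[of "Z ^ i"] Z by simp
    also have "\<dots> \<le> av (q i) * 1"
      using F.N_pow_le1[of Z i] Z av_nonneg by (intro mult_left_mono) auto
    finally show ?thesis by simp
  qed
  have "(\<lambda>i. fnrm av (fps_const (q i) * Z ^ i)) \<longlonglongrightarrow> 0"
    by (rule tendsto_sandwich[OF always_eventually always_eventually tendsto_const q0])
       (use tb fnrm_nonneg Z in auto)
  then obtain l where "fbd av l" "(\<lambda>n. fnrm av ((\<Sum>i<n. fps_const (q i) * Z ^ i) - l)) \<longlonglongrightarrow> 0"
    using F.series_conv[of "\<lambda>i. fps_const (q i) * Z ^ i"] Z by auto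
  then have "\<exists>l. fbd av l \<and> (\<lambda>n. fnrm av (qpart Z n - l)) \<longlonglongrightarrow> 0" unfolding qpart_def by blast
  then show ?thesis unfolding QQ_def by (rule someI_ex)
qed

lemma QQ_lip:
  assumes Z: "fbd av Z" "fnrm av Z \<le> 1" and Z': "fbd av Z'" "fnrm av Z' \<le> 1"
  shows "fnrm av (QQ Z - QQ Z') \<le> M * fnrm av (Z - Z')"
proof (rule F.lim_diff_le[of "qpart Z" "qpart Z'"])
  show "\<forall>n. fnrm av (qpart Z n - qpart Z' n) \<le> M * fnrm av (Z - Z')"
  proof
    fix n
    have "qpart Z n - qpart Z' n = (\<Sum>i<n. fps_const (q i) * (Z ^ i - Z' ^ i))"
      unfolding qpart_def by (simp add: sum_subtractf right_diff_distrib)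
    also have "fnrm av \<dots> \<le> M * fnrm av (Z - Z')"
    proof (rule F.N_sum_le)
      fix i
      have d: "fbd av (Z ^ i - Z' ^ i)" using Z Z' by simp
      have "fnrm av (fps_const (q i) * (Z ^ i - Z' ^ i)) \<le> av (q i) * fnrm av (Z ^ i - Z' ^ i)"
        by (rule fnrm_cmult[OF d])
      also have "\<dots> \<le> M * fnrm av (Z - Z')"
        using qM[of i] F.N_pow_diff[of Z Z' i] Z Z' fnrm_nonneg[OF d] M0 av_nonneg
        by (intro mult_mono) auto
      finally show "fnrm av (fps_const (q i) * (Z ^ i - Z' ^ i)) \<le> M * fnrm av (Z - Z')" .
    qed (use Z Z' M0 fnrm_nonneg in auto)
    finally show "fnrm av (qpart Z n - qpart Z' n) \<le> M * fnrm av (Z - Z')" .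
  qed
qed (use QQ_conv Z Z' qpart_bd in auto)

lemma fps_const_sum': "fps_const (\<Sum>i<n. f i) = (\<Sum>i<(n::nat). fps_const (f i))"
proof (induction n)
  case (Suc n)
  then show ?case using fps_const_add[of "sum f {..<n}" "f n"] by simp
qed simp

lemma QQ_one: "QQ 1 = fps_const (Q 1)"
proof (rule F.lim_unique[of "qpart 1"])
  have "(\<lambda>n. av ((\<Sum>i<n. q i * 1 ^ i) - Q 1)) \<longlonglongrightarrow> 0" using Qd[of 1] by simp
  then have lim: "(\<lambda>n. av ((\<Sum>i<n. q i) - Q 1)) \<longlonglongrightarrow> 0" by simp
  have eq: "qpart 1 n - fps_const (Q 1) = fps_const ((\<Sum>i<n. q i) - Q 1)" for n
    unfolding qpart_def by (simp add: fps_const_sum'[symmetric])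
  have le: "fnrm av (qpart 1 n - fps_const (Q 1)) \<le> av ((\<Sum>i<n. q i) - Q 1)" for n
    unfolding eq using fbd_const by blast
  show "(\<lambda>n. fnrm av (qpart 1 n - fps_const (Q 1))) \<longlonglongrightarrow> 0"
    by (rule tendsto_sandwich[OF always_eventually always_eventually tendsto_const lim])
       (use le fnrm_nonneg qpart_bd in auto)
qed (use QQ_conv[of 1] qpart_bd F.N_one in auto)

lemma Q_lip:
  assumes "av z \<le> 1" "av z' \<le> 1"
  shows "av (Q z - Q z') \<le> M * av (z - z')"
proof (rule C.lim_diff_le[OF _ _ _ _ Qd[OF assms(1)] Qd[OF assms(2)]])
  show "\<forall>n. av ((\<Sum>i<n. q i * z ^ i) - (\<Sum>i<n. q i * z' ^ i)) \<le> M * av (z - z')"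
  proof
    fix n
    have "(\<Sum>i<n. q i * z ^ i) - (\<Sum>i<n. q i * z' ^ i) = (\<Sum>i<n. q i * (z ^ i - z' ^ i))"
      by (simp add: sum_subtractf right_diff_distrib)
    also have "av \<dots> \<le> M * av (z - z')"
    proof (rule C.N_sum_le)
      fix i
      show "av (q i * (z ^ i - z' ^ i)) \<le> M * av (z - z')"
        unfolding av_mult
        using qM[of i] C.N_pow_diff[of z z' i] assms M0 av_nonneg by (intro mult_mono) auto
    qed (use M0 av_nonneg in auto)
    finally show "av ((\<Sum>i<n. q i * z ^ i) - (\<Sum>i<n. q i * z' ^ i)) \<le> M * av (z - z')" .
  qed
qed auto

lemma avQ1: "av (Q 1) \<le> M"
proof (rule C.lim_le[OF _ _ Qd[of 1]])
  show "\<forall>n. av (\<Sum>i<n. q i * 1 ^ i) \<le> M"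
    using qM M0 by (auto intro!: C.N_sum_le)
qed auto

lemma ev_QQ:
  assumes Z: "fbd av Z" "fnrm av Z \<le> 1" and m: "av m < 1"
  shows "ev m (QQ Z) = Q (ev m Z)"
proof (rule C.lim_unique[of "\<lambda>n. ev m (qpart Z n)"])
  have QZ: "fbd av (QQ Z)" using QQ_conv Z by blast
  have le: "av (ev m (qpart Z n) - ev m (QQ Z)) \<le> fnrm av (qpart Z n - QQ Z)" for n
    by (rule ev_cont) (use qpart_bd Z QZ m in auto)
  have lim: "(\<lambda>n. fnrm av (qpart Z n - QQ Z)) \<longlonglongrightarrow> 0" using QQ_conv[OF Z] by blast
  show "(\<lambda>n. av (ev m (qpart Z n) - ev m (QQ Z))) \<longlonglongrightarrow> 0"
    by (rule tendsto_sandwich[OF always_eventually always_eventually tendsto_const lim])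
       (use le av_nonneg in auto)
  have e: "ev m (qpart Z n) = (\<Sum>i<n. q i * ev m Z ^ i)" for n
    unfolding qpart_def
    by (subst ev_sum) (use Z m in \<open>auto simp: ev_mult ev_const ev_pow\<close>)
  have "av (ev m Z) \<le> 1" using ev_le[OF Z(1) m] Z by simp
  then show "(\<lambda>n. av (ev m (qpart Z n) - Q (ev m Z))) \<longlonglongrightarrow> 0"
    unfolding e by (rule Qd)
qed auto

end



lemma fix_iff_alg:
  fixes w a lam P q :: "'a::field"
  assumes P: "P \<noteq> 0" and lam: "lam \<noteq> 0"
  shows "(w - a * w + P * ((1 / lam) * ((1 + w) * a - (1 + w) + q)) = w) \<longleftrightarrow>
         ((lam / P) * a + (1 - lam / P) * ((1 + w) * a) + q = 1 + w)"
proof -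
  have e1: "(w - a * w + P * ((1 / lam) * ((1 + w) * a - (1 + w) + q)) = w) \<longleftrightarrow>
        P * ((1 + w) * a - (1 + w) + q) = lam * a * w"
  proof -
    have "(w - a * w + P * ((1 / lam) * ((1 + w) * a - (1 + w) + q)) = w) \<longleftrightarrow>
          P * ((1 / lam) * ((1 + w) * a - (1 + w) + q)) = a * w"
      by (auto simp: algebra_simps)
    also have "\<dots> \<longleftrightarrow> lam * (P * ((1 / lam) * ((1 + w) * a - (1 + w) + q))) = lam * (a * w)"
      by (simp only: mult_cancel_left) (use lam in simp)
    also have "lam * (P * ((1 / lam) * ((1 + w) * a - (1 + w) + q))) = P * ((1 + w) * a - (1 + w) + q)"
      using lam by (simp add: field_simps)
    finally show ?thesis by (simp add: mult.assoc)
  qed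
  have e2: "((lam / P) * a + (1 - lam / P) * ((1 + w) * a) + q = 1 + w) \<longleftrightarrow>
        P * ((lam / P) * a + (1 - lam / P) * ((1 + w) * a) + q) = P * (1 + w)"
    using P by simp
  have e3: "P * ((lam / P) * a + (1 - lam / P) * ((1 + w) * a) + q) =
      lam * a + (P - lam) * ((1 + w) * a) + P * q"
    using P by (simp add: field_simps)
  show ?thesis unfolding e1 e2 e3 by (auto simp: algebra_simps)
qed

context qset begin

definition Linv :: "'a fps" where "Linv = Abs_fps (\<lambda>n. (-1) ^ n)"

lemma Linv_bd: "fbd av Linv \<and> fnrm av Linv \<le> 1"
proof -
  have "av (Linv $ n) \<le> 1" for n unfolding Linv_def by (simp add: av_pow)
  then show ?thesis using fbdI fnrm_le by blast
qed

lemma Linv_mult: "(1 + fps_X) * Linv = 1"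
  unfolding Linv_def fps_inverse_fps_X_plus1[symmetric]
  by (rule inverse_mult_eq_1') simp

definition rr :: real where "rr = av (Q 1) / p"

lemma rr_facts: "0 \<le> rr" "rr < 1" "rr \<le> 1" "real p * rr = av (Q 1)" "M * rr \<le> rr"
proof -
  have p1: "real p > 1" using p_gt1 by simp
  show "0 \<le> rr" unfolding rr_def using av_nonneg p1 by simp
  have "av (Q 1) < 1" using avQ1 M1 by simp
  then have "av (Q 1) / p < 1" using p1 by (simp add: divide_less_eq)
  then show "rr < 1" "rr \<le> 1" unfolding rr_def by simp_all
  show "real p * rr = av (Q 1)" unfolding rr_def using p1 by simp
  have "M * rr \<le> 1 * rr" by (rule mult_right_mono) (use M1 \<open>0 \<le> rr\<close> in auto)
  then show "M * rr \<le> rr" by simp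
qed

lemma QQ_bd: "fbd av Z \<Longrightarrow> fnrm av Z \<le> 1 \<Longrightarrow> fbd av (QQ Z)"
  using QQ_conv by blast

lemma W_exists: "\<exists>W. fbd av W \<and> fnrm av W \<le> rr \<and> F.Tm Linv QQ W = W"
proof -
  have LS: "Linv \<in> {A. fbd av A}" "fnrm av Linv \<le> 1" using Linv_bd by auto
  have zb: "fbd av (1 + w) \<and> fnrm av (1 + w) \<le> 1" if "fbd av w" "fnrm av w \<le> rr" for w
    using F.N_1w[of w] that rr_facts by auto
  have lip: "fnrm av (QQ (1 + w) - QQ (1 + w')) \<le> fnrm av (w - w')"
    if "fbd av w" "fnrm av w \<le> rr" "fbd av w'" "fnrm av w' \<le> rr" for w w'
  proof -
    have "fnrm av (QQ (1 + w) - QQ (1 + w')) \<le> M * fnrm av ((1 + w) - (1 + w'))"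
      using QQ_lip zb that by blast
    also have "\<dots> = M * fnrm av (w - w')" by simp
    also have "\<dots> \<le> 1 * fnrm av (w - w')"
      using M1 fnrm_nonneg[of "w - w'"] that by (intro mult_right_mono) auto
    finally show ?thesis by simp
  qed
  have th: "0 \<le> max rr (1 / real p)" "max rr (1 / real p) < 1"
    using rr_facts p_gt1 by auto
  show ?thesis
  proof (rule F.banach[OF _ _ th rr_facts(1), simplified])
    fix w assume w: "fbd av w" "fnrm av w \<le> rr"
    have QS: "fbd av (QQ (1 + w))" using QQ_bd zb w by blast
    have "fnrm av (QQ (1 + w)) \<le> real p * rr"
    proof -
      have "fnrm av (QQ (1 + w)) \<le> max (fnrm av (QQ (1 + w) - QQ 1)) (fnrm av (QQ 1))"
        using F.N_add[of "QQ (1 + w) - QQ 1" "QQ 1"] QS QQ_bd[of 1] F.N_one by simp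
      moreover have "fnrm av (QQ (1 + w) - QQ 1) \<le> real p * rr"
      proof -
        have "fnrm av (QQ (1 + w) - QQ 1) \<le> M * fnrm av ((1 + w) - 1)"
          using QQ_lip[of "1 + w" 1] zb w F.N_one by simp
        also have "\<dots> \<le> M * rr" using w M0 by (simp add: mult_left_mono)
        also have "\<dots> \<le> real p * rr" using rr_facts p_gt1 M1
          by (smt (verit, best) mult_right_mono of_nat_1 of_nat_less_iff)
        finally show ?thesis .
      qed
      moreover have "fnrm av (QQ 1) \<le> real p * rr"
        using QQ_one fbd_const[of "Q 1"] rr_facts by simp
      ultimately show ?thesis by simp
    qed
    then have "fnrm av (F.Tm Linv QQ w) \<le> rr"
      using F.Tm_ball[OF LS, of w rr QQ] w rr_facts QS by simp
    moreover have "fbd av (F.Tm Linv QQ w)" using F.Tm_S[of Linv w QQ] LS w QS by simp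
    ultimately show "fbd av (F.Tm Linv QQ w) \<and> fnrm av (F.Tm Linv QQ w) \<le> rr" by simp
  next
    fix w w' assume w: "fbd av w" "fnrm av w \<le> rr" "fbd av w'" "fnrm av w' \<le> rr"
    show "fnrm av (F.Tm Linv QQ w - F.Tm Linv QQ w') \<le> max rr (1 / real p) * fnrm av (w - w')"
      using F.Tm_contr[OF LS, of w rr w' QQ] w rr_facts QQ_bd zb lip by simp
  qed
qed

end



context qset begin

lemma ev_Tm:
  assumes W: "fbd av W" "fnrm av W \<le> 1" and m: "av m < 1"
  shows "ev m (F.Tm Linv QQ W) = C.Tm (ev m Linv) Q (ev m W)"
proof -
  have z: "fbd av (1 + W)" "fnrm av (1 + W) \<le> 1" using F.N_1w[of W] W by auto
  have QS: "fbd av (QQ (1 + W))" using QQ_bd z by blast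
  have L: "fbd av Linv" using Linv_bd by blast
  have e1: "ev m (1 + W) = 1 + ev m W" using ev_add[of 1 W m] ev_1 W m by simp
  have eQ: "ev m (QQ (1 + W)) = Q (1 + ev m W)" using ev_QQ[OF z m] e1 by simp
  show ?thesis
    unfolding F.Tm_def C.Tm_def
    using W z QS L m e1 eQ
    by (simp add: ev_add ev_diff ev_mult ev_pow ev_of_nat)
qed

lemma main:
  "\<exists>h. (\<forall>lam. av (lam - 1) < 1 \<longrightarrow>
                 av (h lam - 1) \<le> av (Q 1) / real p \<and>
                 Pfam p lam (h lam) + Q (h lam) = h lam \<and>
                 (\<forall>z. av (z - 1) \<le> av (Q 1) / real p \<and> Pfam p lam z + Q z = z
                      \<longrightarrow> z = h lam))
             \<and> holo_Lambda av h"
proof -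
  obtain W where W: "fbd av W" "fnrm av W \<le> rr" "F.Tm Linv QQ W = W" using W_exists by blast
  have W1: "fnrm av W \<le> 1" using W rr_facts by simp
  have W1b: "fbd av (1 + W)" using W by simp
  define h where "h lam = ev (lam - 1) (1 + W)" for lam
  have holo: "holo_Lambda av h"
    unfolding holo_Lambda_def ps_sums_def
  proof (intro exI allI impI)
    fix lam assume "av (lam - 1) < 1"
    then show "(\<lambda>n. av ((\<Sum>i<n. (1 + W) $ i * (lam - 1) ^ i) - h lam)) \<longlonglongrightarrow> 0"
      using ev_conv[OF W1b] unfolding h_def psum_def by blast
  qed
  have pp0: "(of_nat p :: 'a) \<noteq> 0" using p_gt1 by simp
  have th: "max rr (1 / real p) < 1" using rr_facts p_gt1 by auto
  have pt: "\<forall>lam. av (lam - 1) < 1 \<longrightarrow>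
                 av (h lam - 1) \<le> av (Q 1) / real p \<and>
                 Pfam p lam (h lam) + Q (h lam) = h lam \<and>
                 (\<forall>z. av (z - 1) \<le> av (Q 1) / real p \<and> Pfam p lam z + Q z = z
                      \<longrightarrow> z = h lam)"
  proof (intro allI impI)
    fix lam assume m: "av (lam - 1) < 1"
    define m' where "m' = lam - 1"
    have mm: "av m' < 1" using m m'_def by simp
    define w where "w = ev m' W"
    have hw: "h lam = 1 + w" unfolding h_def w_def m'_def[symmetric]
      using ev_add[OF _ W(1) mm, of 1] ev_1[OF mm] by simp
    have wr: "av w \<le> rr" using ev_le[OF W(1) mm] W w_def by simp
    have lam_eq: "lam = 1 + m'" by (simp add: m'_def)
    have avlam: "av lam = 1" unfolding lam_eq using av_strict[of m' 1] mm by (simp add: add.commute)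
    then have lam0: "lam \<noteq> 0" by auto
    have evL: "ev m' Linv = 1 / lam"
    proof -
      have "ev m' ((1 + fps_X) * Linv) = 1" using Linv_mult ev_1[OF mm] by simp
      moreover have "ev m' ((1 + fps_X) * Linv) = (1 + m') * ev m' Linv"
        using ev_mult[of "1 + fps_X" Linv m'] ev_add[of 1 fps_X m'] ev_1[OF mm] ev_X[OF mm] mm Linv_bd
        by simp
      ultimately show ?thesis using lam0 lam_eq by (simp add: field_simps)
    qed
    have fixw: "C.Tm (1 / lam) Q w = w"
      using ev_Tm[OF W(1) W1 mm] W(3) evL w_def by simp
    have iff: "C.Tm (1 / lam) Q v = v \<longleftrightarrow> Pfam p lam (1 + v) + Q (1 + v) = 1 + v" for v
      unfolding C.Tm_def Pfam_def using fix_iff_alg[OF pp0 lam0, of v "(1 + v) ^ p" "Q (1 + v)"]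
      by (simp add: power_add mult_ac)
    have L1: "av (1 / lam) \<le> 1" using avlam by (simp add: av_divide)
    have uniq: "z = h lam" if z: "av (z - 1) \<le> av (Q 1) / real p" "Pfam p lam z + Q z = z" for z
    proof -
      define w' where "w' = z - 1"
      have z1: "z = 1 + w'" by (simp add: w'_def)
      have w'r: "av w' \<le> rr" using z w'_def rr_def by simp
      have fixw': "C.Tm (1 / lam) Q w' = w'" using iff[of w'] z z1 by simp
      have a1: "av (1 + w) \<le> 1" "av (1 + w') \<le> 1" using C.N_1w[of w] C.N_1w[of w'] wr w'r rr_facts by auto
      have lip: "av (Q (1 + w) - Q (1 + w')) \<le> av (w - w')"
      proof -
        have "av (Q (1 + w) - Q (1 + w')) \<le> M * av ((1 + w) - (1 + w'))" using Q_lip a1 by blast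
        also have "\<dots> = M * av (w - w')" by simp
        also have "\<dots> \<le> 1 * av (w - w')" using M1 av_nonneg by (intro mult_right_mono) auto
        finally show ?thesis by simp
      qed
      have "av (C.Tm (1 / lam) Q w - C.Tm (1 / lam) Q w') \<le> max rr (1 / real p) * av (w - w')"
        by (rule C.Tm_contr) (use L1 wr w'r rr_facts lip in auto)
      then have "av (w - w') \<le> max rr (1 / real p) * av (w - w')" using fixw fixw' by simp
      then have "w = w'" using C.contr_unique[OF _ _ _ th] by blast
      then show ?thesis using hw z1 by simp
    qed
    show "av (h lam - 1) \<le> av (Q 1) / real p \<and> Pfam p lam (h lam) + Q (h lam) = h lam \<and>
          (\<forall>z. av (z - 1) \<le> av (Q 1) / real p \<and> Pfam p lam z + Q z = z \<longrightarrow> z = h lam)"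
      using hw wr rr_def iff[of w] fixw uniq by auto
  qed
  show ?thesis using pt holo by blast
qed

end

theorem proposition3p2:
  fixes p :: nat and av :: "'a::field_char_0 \<Rightarrow> real"
    and rhat :: real and q :: "nat \<Rightarrow> 'a" and Q :: "'a \<Rightarrow> 'a"
  assumes Cp: "is_Cp p av"
    and rhat_val: "\<exists>w. w \<noteq> 0 \<and> av w = rhat" and rhat_gt: "rhat > 1"
    and q_conv: "(\<lambda>i. av (q i) * rhat ^ i) \<longlonglongrightarrow> 0"
    and Q_def: "\<forall>z. av z \<le> rhat \<longrightarrow> ps_sums av q z (Q z)"
    and q_norm: "(SUP i. av (q i) * rhat ^ i) < real p powr (- 1 / (real p - 1))"
  shows "\<exists>h. (\<forall>lam. av (lam - 1) < 1 \<longrightarrow>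
                 av (h lam - 1) \<le> av (Q 1) / real p \<and>
                 Pfam p lam (h lam) + Q (h lam) = h lam \<and>
                 (\<forall>z. av (z - 1) \<le> av (Q 1) / real p \<and> Pfam p lam z + Q z = z
                      \<longrightarrow> z = h lam))
             \<and> holo_Lambda av h"
proof -
  interpret cpset p av by unfold_locales (rule Cp)
  define M where "M = (SUP i. av (q i) * rhat ^ i)"
  have bdd: "bdd_above (range (\<lambda>i. av (q i) * rhat ^ i))"
    using q_conv by (intro Bseq_bdd_above convergent_imp_Bseq convergentI)
  have le1: "av (q i) \<le> av (q i) * rhat ^ i" for i
  proof -
    have "1 \<le> rhat ^ i" using rhat_gt by (simp add: one_le_power)
    then show ?thesis using av_nonneg[of "q i"] by (metis mult.right_neutral mult_left_mono)
  qed
  have qM: "av (q i) \<le> M" for i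
    using le1[of i] cSUP_upper[OF UNIV_I bdd, of i] M_def by simp
  have M0: "0 \<le> M" using qM[of 0] av_nonneg[of "q 0"] by simp
  have p1: "real p > 1" using p_gt1 by simp
  have "real p powr (- 1 / (real p - 1)) \<le> real p powr 0"
    using p1 by (intro powr_mono) (auto simp: divide_nonpos_pos)
  then have "real p powr (- 1 / (real p - 1)) \<le> 1" using p1 by simp
  then have M1: "M < 1" using q_norm M_def by simp
  have q0: "(\<lambda>i. av (q i)) \<longlonglongrightarrow> 0"
    by (rule tendsto_sandwich[OF always_eventually always_eventually tendsto_const q_conv])
       (use le1 av_nonneg in auto)
  have Qd: "(\<lambda>n. av ((\<Sum>i<n. q i * z ^ i) - Q z)) \<longlonglongrightarrow> 0" if "av z \<le> 1" for z
    using Q_def that rhat_gt unfolding ps_sums_def by simp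
  interpret qset p av q Q M
    by unfold_locales (use qM M0 M1 q0 Qd in auto)
  show ?thesis by (rule main)
qed


end
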